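(* Let $n\ge1$, $k\in\{1,\ldots,n\}$ and $f\in L^2([0,1]^n)$. If $x_{(k)}$ is ineffective almost everywhere for $f$, then $I(f,k)=0$.
   Context: $L^2([0,1]^n)$ is the space of square integrable real functions on $[0,1]^n$ modulo equality almost everywhere. For $\mathbf{x}\in[0,1]^n$, $x_{(1)}\le\cdots\le x_{(n)}$ are its coordinates in ascending order, with $x_{(0)}=0$, $x_{(n+1)}=1$. The influence index is $I(f,k)=-(n+1)(n+2)\int_{[0,1]^n}f(\mathbf{x})\,\big(x_{(k+1)}-2x_{(k)}+x_{(k-1)}\big)\,d\mathbf{x}$. $S_n$ is the symmetric group on $\{1,\ldots,n\}$; $[0,1]^n_\pi=\{\mathbf{x}:x_{\pi(1)}<\cdots<x_{\pi(n)}\}$; $\mathbf{e}_i$ is the $i$th standard basis vector. For $\mathbf{x}\in[0,1]^n_\pi$ and real $h$ with $\mathbf{x}+h\mathbf{e}_{\pi(k)}\in[0,1]^n_\pi$, set $\Delta_{(k),h}f(\mathbf{x})=f(\mathbf{x}+h\mathbf{e}_{\pi(k)})-f(\mathbf{x})$. The order statistic $x_{(k)}$ is ineffective almost everywhere for $f$ if $\Delta_{(k),\,y-x_{(k)}}f(\mathbf{x})=0$ for almost all $\mathbf{x}\in\bigcup_{\pi\in S_n}[0,1]^n_\pi$ and almost all $y\in\,]x_{(k-1)},x_{(k+1)}[$. *)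

theory Defs
  imports "HOL-Analysis.Analysis" "HOL-Combinatorics.Permutations"
begin

text \<open>Points of [0,1]^n are represented as functions nat => real on the index set
  {..<n} (coordinates 0,...,n-1 correspond to coordinates 1,...,n of the paper).\<close>

definition cube :: "nat \<Rightarrow> (nat \<Rightarrow> real) measure" where
  "cube n = PiM {..<n} (\<lambda>_. restrict_space lborel {0..1})"

definition ord_stat :: "nat \<Rightarrow> (nat \<Rightarrow> real) \<Rightarrow> nat \<Rightarrow> real" where
  "ord_stat n x k =
     (if k = 0 then 0 else if k = n + 1 then 1 else sort (map x [0..<n]) ! (k - 1))"

definition influence :: "nat \<Rightarrow> ((nat \<Rightarrow> real) \<Rightarrow> real) \<Rightarrow> nat \<Rightarrow> real" where
  "influence n f k = - (real (n + 1) * real (n + 2)) *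
     (\<integral>x. f x * (ord_stat n x (k + 1) - 2 * ord_stat n x k + ord_stat n x (k - 1)) \<partial>cube n)"

definition chamber :: "nat \<Rightarrow> (nat \<Rightarrow> nat) \<Rightarrow> (nat \<Rightarrow> real) set" where
  "chamber n \<pi> = {x \<in> space (cube n). \<forall>i j. i < j \<and> j < n \<longrightarrow> x (\<pi> i) < x (\<pi> j)}"

text \<open>Delta_{(k),h} f (x) = f(x + h e_{pi(k)}) - f(x), for x in the chamber of pi
  (paper index k corresponds to position k-1 here).\<close>
definition Delta :: "((nat \<Rightarrow> real) \<Rightarrow> real) \<Rightarrow> (nat \<Rightarrow> nat) \<Rightarrow> nat \<Rightarrow> real \<Rightarrow> (nat \<Rightarrow> real) \<Rightarrow> real" where
  "Delta f \<pi> k h x = f (x(\<pi> (k - 1) := x (\<pi> (k - 1)) + h)) - f x"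

text \<open>x_(k) is ineffective almost everywhere for f.  For x in the union of the
  chambers, the permutation pi with x in [0,1]^n_pi is unique.\<close>
definition ineffective_ae :: "nat \<Rightarrow> ((nat \<Rightarrow> real) \<Rightarrow> real) \<Rightarrow> nat \<Rightarrow> bool" where
  "ineffective_ae n f k \<longleftrightarrow>
     (AE x in cube n. \<forall>\<pi>. \<pi> permutes {..<n} \<and> x \<in> chamber n \<pi> \<longrightarrow>
        (AE y in lborel. y \<in> {ord_stat n x (k - 1) <..< ord_stat n x (k + 1)} \<longrightarrow>
           Delta f \<pi> k (y - ord_stat n x k) x = 0))"

end

theory Submission
  imports Defs
begin


abbreviation "MM \<equiv> (\<lambda>_::nat. restrict_space lborel {0..1::real})"

lemma psf: "product_sigma_finite MM"
  unfolding product_sigma_finite_def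
  by (auto intro!: sigma_finite_measure_restrict_space lborel.sigma_finite_measure_axioms)

lemma cube_split: "j < n \<Longrightarrow> cube n = PiM (insert j ({..<n}-{j})) MM"
  unfolding cube_def by (metis insert_Diff lessThan_iff)

lemma meas_upd[measurable]:
  assumes "j < n"
  shows "(\<lambda>x. (fst x)(j := snd x)) \<in> PiM ({..<n}-{j}) (\<lambda>i. restrict_space borel {0..1::real}) \<Otimes>\<^sub>M
       restrict_space borel {0..1} \<rightarrow>\<^sub>M PiM {..<n} (\<lambda>i. restrict_space borel {0..1})"
  using measurable_add_dim[of j "{..<n}-{j}" "\<lambda>i. restrict_space borel {0..1::real}"] assms
  by (simp add: case_prod_beta' insert_absorb)

lemma AE_split:
  assumes j: "j < n" and ae: "AE x in cube n. P x"
  shows "AE z in PiM ({..<n}-{j}) MM. AE t in MM j. P (z(j:=t))"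
proof -
  interpret product_sigma_finite MM by (rule psf)
  let ?I = "{..<n}-{j}"
  from ae obtain N where N: "{x\<in>space (cube n). \<not> P x} \<subseteq> N" "emeasure (cube n) N = 0" "N \<in> sets (cube n)"
    by (auto elim: AE_E)
  have Nm[measurable]: "N \<in> sets (PiM (insert j ?I) MM)" using N(3) cube_split[OF j] by simp
  have Nm2[measurable]: "N \<in> sets (PiM {..<n} MM)" using N(3) by (simp add: cube_def)
  have "0 = (\<integral>\<^sup>+x. indicator N x \<partial>PiM (insert j ?I) MM)"
    using N(2) Nm cube_split[OF j] by (simp del: insert_Diff_single)
  also have "\<dots> = (\<integral>\<^sup>+z. (\<integral>\<^sup>+t. indicator N (z(j:=t)) \<partial>MM j) \<partial>PiM ?I MM)"
    by (rule product_nn_integral_insert) (use j Nm2 in \<open>auto simp: insert_absorb\<close>)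
  moreover have meas: "(\<lambda>z. \<integral>\<^sup>+t. indicator N (z(j:=t)) \<partial>MM j) \<in> borel_measurable (PiM ?I MM)"
    using j by measurable
  ultimately have Z: "AE z in PiM ?I MM. (\<integral>\<^sup>+t. indicator N (z(j:=t)) \<partial>MM j) = 0"
    by (simp add: nn_integral_0_iff_AE[OF meas, symmetric])
  have inner: "AE t in MM j. P (z(j:=t))"
    if z: "z \<in> space (PiM ?I MM)" and z0: "(\<integral>\<^sup>+t. indicator N (z(j:=t)) \<partial>MM j) = 0" for z
  proof -
    from z0 have A: "AE t in MM j. indicator N (z(j:=t)) = (0::ennreal)"
      by (subst (asm) nn_integral_0_iff_AE) (use z in measurable)
    have B: "P (z(j:=t))" if t: "t \<in> space (MM j)" and "indicator N (z(j:=t)) = (0::ennreal)" for t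
    proof -
      from that have "z(j:=t) \<notin> N" by (auto simp: indicator_def)
      moreover have "z(j:=t) \<in> space (cube n)" using z t j
        by (auto simp: cube_def space_PiM PiE_def extensional_def Pi_def split: if_splits)
      ultimately show "P (z(j:=t))" using N(1) by auto
    qed
    show ?thesis by (rule AE_mp[OF A AE_I2]) (use B in auto)
  qed
  show ?thesis by (rule AE_mp[OF Z AE_I2]) (use inner in auto)
qed


lemma chamber_inj:
  assumes "\<pi> permutes {..<n}" "x \<in> chamber n \<pi>"
  shows "inj_on x {..<n}"
proof (rule inj_onI)
  fix a b assume a: "a \<in> {..<n}" and b: "b \<in> {..<n}" and e: "x a = x b"
  have bij: "bij_betw \<pi> {..<n} {..<n}" using assms(1) by (rule permutes_imp_bij)
  obtain i where i: "i < n" "\<pi> i = a" using a bij by (metis bij_betw_iff_bijections lessThan_iff)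
  obtain i' where i': "i' < n" "\<pi> i' = b" using b bij by (metis bij_betw_iff_bijections lessThan_iff)
  have c: "\<And>u v. u < v \<Longrightarrow> v < n \<Longrightarrow> x (\<pi> u) < x (\<pi> v)" using assms(2) by (auto simp: chamber_def)
  have "\<not> i < i'" using c[of i i'] i i' e by auto
  moreover have "\<not> i' < i" using c[of i' i] i i' e by auto
  ultimately have "i = i'" by simp
  then show "a = b" using i i' by simp
qed

lemma sort_chamber:
  assumes p: "\<pi> permutes {..<n}" and x: "x \<in> chamber n \<pi>"
  shows "sort (map x [0..<n]) = map (\<lambda>i. x (\<pi> i)) [0..<n]"
proof (rule properties_for_sort)
  have "mset (map \<pi> [0..<n]) = mset [0..<n]"
    using image_mset_mset_set[OF permutes_inj_on[OF p]] permutes_image[OF p]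
    by (simp add: mset_upt atLeast0LessThan)
  then have "mset (map x (map \<pi> [0..<n])) = mset (map x [0..<n])"
    by (metis mset_map)
  then show "mset (map (\<lambda>i. x (\<pi> i)) [0..<n]) = mset (map x [0..<n])" by (simp add: o_def)
  show "sorted (map (\<lambda>i. x (\<pi> i)) [0..<n])"
  proof (rule sorted_iff_nth_mono_less[THEN iffD2], intro allI impI)
    fix i j assume "i < j" "j < length (map (\<lambda>i. x (\<pi> i)) [0..<n])"
    then show "map (\<lambda>i. x (\<pi> i)) [0..<n] ! i \<le> map (\<lambda>i. x (\<pi> i)) [0..<n] ! j"
      using x by (auto simp: chamber_def intro: less_imp_le)
  qed
qed

lemma ord_stat_chamber:
  assumes "\<pi> permutes {..<n}" "x \<in> chamber n \<pi>" "1 \<le> k" "k \<le> n"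
  shows "ord_stat n x k = x (\<pi> (k-1))"
proof -
  have "[0..<n] ! (k-1) = k-1" using assms by simp
  then show ?thesis using assms by (simp add: ord_stat_def sort_chamber)
qed

lemma chamber_unique:
  assumes "\<pi> permutes {..<n}" "x \<in> chamber n \<pi>" "\<sigma> permutes {..<n}" "x \<in> chamber n \<sigma>"
  shows "\<pi> = \<sigma>"
proof
  fix i
  show "\<pi> i = \<sigma> i"
  proof (cases "i < n")
    case True
    have "map (\<lambda>i. x (\<pi> i)) [0..<n] = map (\<lambda>i. x (\<sigma> i)) [0..<n]"
      using sort_chamber[OF assms(1,2)] sort_chamber[OF assms(3,4)] by simp
    then have "x (\<pi> i) = x (\<sigma> i)" using True by (metis (no_types, lifting) map_eq_conv atLeastLessThan_iff set_upt zero_le)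
    moreover have "\<pi> i \<in> {..<n}" "\<sigma> i \<in> {..<n}" using True assms(1,3) by (metis permutes_in_image lessThan_iff)+
    ultimately show ?thesis using chamber_inj[OF assms(1,2)] by (auto dest: inj_onD)
  next
    case False
    then show ?thesis using assms(1,3) by (simp add: permutes_def)
  qed
qed

lemma chamber_exists:
  assumes x: "x \<in> space (cube n)" and inj: "inj_on x {..<n}"
  obtains \<pi> where "\<pi> permutes {..<n}" "x \<in> chamber n \<pi>"
proof -
  let ?xs = "map x [0..<n]"
  have "mset (sort ?xs) = mset ?xs" by simp
  then obtain p where p: "p permutes {..<length ?xs}" "permute_list p ?xs = sort ?xs"
    by (rule mset_eq_permutation)
  have p': "p permutes {..<n}" using p by simp
  have nth: "sort ?xs ! i = x (p i)" if "i < n" for i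
  proof -
    have "p i < n" using p' that by (metis permutes_in_image lessThan_iff)
    then show ?thesis using p(2)[symmetric] p' that by (simp add: permute_list_nth p(1))
  qed
  have "distinct ?xs" using inj by (simp add: distinct_map atLeast0LessThan)
  then have "sorted_wrt (<) (sort ?xs)" by (simp add: strict_sorted_iff)
  then have "x (p i) < x (p j)" if "i < j" "j < n" for i j
    using that nth by (auto simp: sorted_wrt_iff_nth_less)
  then have "x \<in> chamber n p" using x by (auto simp: chamber_def)
  then show ?thesis using that p' by blast
qed


lemma comp_meas[measurable (raw)]:
  "i < n \<Longrightarrow> (\<lambda>x. x i) \<in> borel_measurable (PiM {..<n} MM)"
proof -
  assume i: "i < n"
  have "(\<lambda>x. x i) \<in> PiM {..<n} MM \<rightarrow>\<^sub>M restrict_space lborel {0..1}"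
    by (rule measurable_component_singleton) (use i in auto)
  moreover have "(\<lambda>x. x) \<in> restrict_space lborel {0..1::real} \<rightarrow>\<^sub>M borel"
    by (intro measurable_restrict_space1) simp
  ultimately show ?thesis by (rule measurable_compose)
qed

lemma null_diag:
  assumes i: "i < n" and j: "j < n" and ij: "i \<noteq> j"
  shows "AE x in cube n. x i \<noteq> x j"
proof -
  interpret product_sigma_finite MM by (rule psf)
  let ?I = "{..<n}-{j}"
  define D where "D = {x \<in> space (cube n). x i = x j}"
  have Dm: "D \<in> sets (cube n)" unfolding D_def cube_def using i j by measurable
  have Dm2[measurable]: "D \<in> sets (PiM {..<n} MM)" using Dm by (simp add: cube_def)
  have "emeasure (cube n) D = (\<integral>\<^sup>+x. indicator D x \<partial>PiM (insert j ?I) MM)"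
    using Dm j by (simp add: cube_def insert_absorb)
  also have "\<dots> = (\<integral>\<^sup>+z. (\<integral>\<^sup>+t. indicator D (z(j:=t)) \<partial>MM j) \<partial>PiM ?I MM)"
    by (rule product_nn_integral_insert) (use j Dm2 in \<open>auto simp: insert_absorb\<close>)
  also have "\<dots> = (\<integral>\<^sup>+z. 0 \<partial>PiM ?I MM)"
  proof (rule nn_integral_cong)
    fix z assume z: "z \<in> space (PiM ?I MM)"
    have zi: "z i \<in> {0..1}" using z i ij by (auto simp: space_PiM PiE_def Pi_def)
    have "(\<integral>\<^sup>+t. indicator D (z(j:=t)) \<partial>MM j) = (\<integral>\<^sup>+t. indicator {z i} t \<partial>MM j)"
    proof (rule nn_integral_cong)
      fix t assume t: "t \<in> space (MM j)"
      have "z(j:=t) \<in> space (cube n)" using z t j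
        by (auto simp: cube_def space_PiM PiE_def extensional_def Pi_def split: if_splits)
      then show "indicator D (z(j:=t)) = (indicator {z i} t :: ennreal)"
        using ij by (auto simp: D_def indicator_def)
    qed
    also have "\<dots> = emeasure (MM j) {z i}"
      by (rule nn_integral_indicator) (use zi in \<open>simp add: sets_restrict_space_iff\<close>)
    also have "\<dots> = 0"
      using zi by (simp add: emeasure_restrict_space)
    finally show "(\<integral>\<^sup>+t. indicator D (z(j:=t)) \<partial>MM j) = 0" .
  qed
  finally have "emeasure (cube n) D = 0" by simp
  then show ?thesis using Dm by (intro AE_I[where N=D]) (auto simp: D_def)
qed

lemma AE_inj: "AE x in cube n. inj_on x {..<n}"
proof -
  have "AE x in cube n. \<forall>i\<in>{..<n}. \<forall>j\<in>{..<n}. i \<noteq> j \<longrightarrow> x i \<noteq> x j"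
    by (auto simp: AE_finite_all intro: null_diag)
  then show ?thesis by (rule AE_mp) (auto intro!: AE_I2 simp: inj_on_def)
qed


lemma oneD:
  fixes a b :: real assumes ab: "a \<le> b"
  shows "(\<integral>t. indicator {a<..<b} t * (a + b - 2*t) \<partial>lborel) = 0"
proof -
  have "(\<integral>t. indicator {a<..<b} t * (a + b - 2*t) \<partial>lborel) = (\<integral>t. indicator {a..b} t *\<^sub>R (a + b - 2*t) \<partial>lborel)"
  proof (rule integral_cong_AE)
    show "AE t in lborel. indicator {a<..<b} t * (a + b - 2*t) = indicator {a..b} t *\<^sub>R (a + b - 2*t)"
      using AE_lborel_singleton[of a] AE_lborel_singleton[of b]
      by eventually_elim (auto simp: indicator_def)
  qed simp_all
  also have "\<dots> = ((a+b)*b - b^2) - ((a+b)*a - a^2)"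
    by (rule integral_FTC_atLeastAtMost[OF ab])
       (auto intro!: continuous_intros derivative_eq_intros simp: has_real_derivative_iff_has_vector_derivative[symmetric])
  also have "\<dots> = 0" by (simp add: algebra_simps power2_eq_square)
  finally show ?thesis .
qed


lemma upd_perm:
  assumes p: "\<pi> permutes {..<n}"
  shows "(z(\<pi> m := t)) (\<pi> u) = (if u = m then t else z (\<pi> u))"
  using permutes_inj[OF p] by (auto dest: injD)

lemma chamber_lt:
  assumes "x \<in> chamber n \<pi>" "u < v" "v < n" shows "x (\<pi> u) < x (\<pi> v)"
  using assms by (auto simp: chamber_def)

lemma chamber_le:
  assumes "x \<in> chamber n \<pi>" "u \<le> v" "v < n" shows "x (\<pi> u) \<le> x (\<pi> v)"
  using assms chamber_lt[OF assms(1)] by (cases "u = v") (auto intro: less_imp_le)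

lemma space_upd:
  assumes "z(j:=t0) \<in> space (cube n)" "t \<in> {0..1}" "j < n"
  shows "z(j:=t) \<in> space (cube n)"
  using assms by (auto simp: cube_def space_PiM PiE_def extensional_def Pi_def split: if_splits)

lemma chamber_upd_iff:
  assumes p: "\<pi> permutes {..<n}" and k: "1 \<le> k" "k \<le> n"
    and x0: "z(\<pi>(k-1):=t0) \<in> chamber n \<pi>" and t: "t \<in> {0..1}"
  shows "z(\<pi>(k-1):=t) \<in> chamber n \<pi> \<longleftrightarrow> (k = 1 \<or> z(\<pi>(k-2)) < t) \<and> (k = n \<or> t < z(\<pi> k))"
proof -
  let ?m = "k - 1"
  let ?x = "z(\<pi> ?m := t0)" and ?y = "z(\<pi> ?m := t)"
  have jn: "\<pi> ?m < n" using p k by (metis permutes_in_image lessThan_iff diff_less less_le_trans zero_less_one)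
  have sp: "?y \<in> space (cube n)" using space_upd[OF _ t jn] x0 by (auto simp: chamber_def)
  have ux: "?x (\<pi> u) = (if u = ?m then t0 else z (\<pi> u))" for u by (rule upd_perm[OF p])
  have uy: "?y (\<pi> u) = (if u = ?m then t else z (\<pi> u))" for u by (rule upd_perm[OF p])
  have km: "k \<noteq> ?m" using k by arith
  show ?thesis
  proof
    assume y: "?y \<in> chamber n \<pi>"
    show "(k = 1 \<or> z(\<pi>(k-2)) < t) \<and> (k = n \<or> t < z(\<pi> k))"
    proof
      show "k = 1 \<or> z(\<pi>(k-2)) < t"
      proof (cases "k = 1")
        case False
        then have "?y (\<pi> (k-2)) < ?y (\<pi> ?m)" using k by (intro chamber_lt[OF y]) auto
        moreover have "k - 2 \<noteq> ?m" using False k by arith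
        ultimately show ?thesis using uy[of "k-2"] uy[of ?m] by simp
      qed simp
      show "k = n \<or> t < z(\<pi> k)"
      proof (cases "k = n")
        case False
        then have "?y (\<pi> ?m) < ?y (\<pi> k)" using k by (intro chamber_lt[OF y]) auto
        moreover have "k \<noteq> ?m" using k by arith
        ultimately show ?thesis using uy[of "k"] uy[of ?m] by simp
      qed simp
    qed
  next
    assume h: "(k = 1 \<or> z(\<pi>(k-2)) < t) \<and> (k = n \<or> t < z(\<pi> k))"
    have "?y (\<pi> u) < ?y (\<pi> v)" if uv: "u < v" "v < n" for u v
    proof -
      consider "u \<noteq> ?m" "v \<noteq> ?m" | "u = ?m" | "v = ?m" by blast
      then show ?thesis
      proof cases
        case 1
        then show ?thesis using chamber_lt[OF x0 uv] ux[of u] ux[of v] uy[of u] uy[of v] by simp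
      next
        case 2
        then have "k \<noteq> n" "k \<le> v" using uv k by auto
        then have "t < z (\<pi> k)" using h by auto
        also have "z (\<pi> k) = ?x (\<pi> k)" using ux[of k] km by simp
        also have "\<dots> \<le> ?x (\<pi> v)" using \<open>k \<le> v\<close> uv by (intro chamber_le[OF x0]) auto
        also have "\<dots> = ?y (\<pi> v)" using ux[of v] uy[of v] 2 uv by simp
        finally show ?thesis using uy[of u] 2 by simp
      next
        case 3
        then have "k \<noteq> 1" "u \<le> k - 2" using uv k by auto
        have "?y (\<pi> u) = ?x (\<pi> u)" using ux[of u] uy[of u] 3 uv by simp
        also have "\<dots> \<le> ?x (\<pi> (k-2))" using \<open>u \<le> k - 2\<close> uv k by (intro chamber_le[OF x0]) auto
        also have "\<dots> = z (\<pi> (k-2))" using ux[of "k-2"] \<open>k \<noteq> 1\<close> k by (simp; arith)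
        also have "\<dots> < t" using h \<open>k \<noteq> 1\<close> by auto
        finally show ?thesis using uy[of v] 3 by simp
      qed
    qed
    then show "?y \<in> chamber n \<pi>" using sp by (auto simp: chamber_def)
  qed
qed


lemma meas_z:
  assumes j: "j < n" and z: "z \<in> space (PiM ({..<n}-{j}) MM)"
  shows "(\<lambda>t. z(j:=t)) \<in> MM j \<rightarrow>\<^sub>M cube n"
proof -
  have "(\<lambda>(f, y). f(j := y)) \<in> PiM ({..<n}-{j}) MM \<Otimes>\<^sub>M MM j \<rightarrow>\<^sub>M PiM (insert j ({..<n}-{j})) MM"
    by (rule measurable_add_dim)
  then have "(\<lambda>(f, y). f(j := y)) \<in> PiM ({..<n}-{j}) MM \<Otimes>\<^sub>M MM j \<rightarrow>\<^sub>M cube n"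
    using cube_split[OF j] by simp
  from measurable_compose[OF measurable_Pair1'[OF z] this] show ?thesis by simp
qed

lemma comp_meas':
  assumes "\<pi> permutes {..<n}" "u < n"
  shows "(\<lambda>x. x (\<pi> u)) \<in> borel_measurable (cube n)"
  unfolding cube_def
  by (rule comp_meas) (use assms in \<open>metis permutes_in_image lessThan_iff\<close>)

lemma chamber_sets:
  assumes p: "\<pi> permutes {..<n}"
  shows "chamber n \<pi> \<in> sets (cube n)"
proof -
  have eq: "chamber n \<pi> = {x\<in>space (cube n). \<forall>u\<in>{..<n}. \<forall>v\<in>{..<n}. u < v \<longrightarrow> x (\<pi> u) < x (\<pi> v)}"
    unfolding chamber_def by (auto 0 0 intro!: Collect_cong)
  have "Measurable.pred (cube n) (\<lambda>x. \<forall>u\<in>{..<n}. \<forall>v\<in>{..<n}. u < v \<longrightarrow> x (\<pi> u) < x (\<pi> v))"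
  proof (intro pred_intros_finite finite_lessThan)
    fix u v assume "u \<in> {..<n}" "v \<in> {..<n}"
    have mu: "(\<lambda>x. x (\<pi> u)) \<in> borel_measurable (cube n)" using comp_meas'[OF p, of u] \<open>u \<in> {..<n}\<close> by simp
    have mv: "(\<lambda>x. x (\<pi> v)) \<in> borel_measurable (cube n)" using comp_meas'[OF p, of v] \<open>v \<in> {..<n}\<close> by simp
    show "Measurable.pred (cube n) (\<lambda>x. u < v \<longrightarrow> x (\<pi> u) < x (\<pi> v))"
      by (intro pred_intros_imp') (simp add: pred_def borel_measurable_less[OF mu mv])
  qed
  then show ?thesis unfolding eq by (rule predE)
qed

lemma cube_coord:
  assumes "x \<in> space (cube n)" "\<pi> permutes {..<n}" "u < n"
  shows "x (\<pi> u) \<in> {0..1}"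
proof -
  have "\<pi> u < n" using assms by (metis permutes_in_image lessThan_iff)
  then show ?thesis using PiE_mem[OF assms(1)[unfolded cube_def space_PiM]] by simp
qed



lemma core:
  assumes p: "\<pi> permutes {..<n}" and k: "1 \<le> k" "k \<le> n"
    and fm: "f \<in> borel_measurable (cube n)" and fi: "integrable (cube n) f"
    and H: "AE x in cube n. x \<in> chamber n \<pi> \<longrightarrow>
       (AE y in lborel. y \<in> {ord_stat n x (k-1) <..< ord_stat n x (k+1)} \<longrightarrow> f (x(\<pi>(k-1) := y)) = f x)"
  shows "(\<integral>x. f x * ((if k = n then 1 else x (\<pi> k)) - 2 * x (\<pi> (k-1)) + (if k = 1 then 0 else x (\<pi> (k-2))))
            * indicator (chamber n \<pi>) x \<partial>cube n) = 0"
proof -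
  define j where "j = \<pi> (k-1)"
  have jn: "j < n" unfolding j_def using p k by (metis permutes_in_image lessThan_iff diff_less less_le_trans zero_less_one)
  define A where "A z = (if k = 1 then 0 else z (\<pi> (k-2)))" for z :: "nat \<Rightarrow> real"
  define B where "B z = (if k = n then 1 else z (\<pi> k))" for z :: "nat \<Rightarrow> real"
  define h where "h x = f x * (B x - 2 * x j + A x) * indicator (chamber n \<pi>) x" for x
  let ?I = "{..<n}-{j}"
  have Am: "A \<in> borel_measurable (cube n)" unfolding A_def using comp_meas'[OF p, of "k-2"] k by auto
  have Bm: "B \<in> borel_measurable (cube n)" unfolding B_def using comp_meas'[OF p, of "k"] k by (cases "k = n") auto
  have jm: "(\<lambda>x. x j) \<in> borel_measurable (cube n)" unfolding j_def using comp_meas'[OF p, of "k-1"] k by auto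
  have hm: "h \<in> borel_measurable (cube n)" unfolding h_def
    using Am Bm jm fm chamber_sets[OF p] by measurable
  have hi: "integrable (cube n) h"
  proof -
    have i4: "integrable (cube n) (\<lambda>x. 4 * f x)" using fi by simp
    have "AE x in cube n. norm (h x) \<le> norm (4 * f x)"
    proof (rule AE_I2)
      fix x assume x: "x \<in> space (cube n)"
      have "A x \<in> {0..1}" "B x \<in> {0..1}" "x j \<in> {0..1}"
        using cube_coord[OF x p, of "k-2"] cube_coord[OF x p, of "k"] cube_coord[OF x p, of "k-1"] k
        by (auto simp: A_def B_def j_def)
      then have "\<bar>B x - 2 * x j + A x\<bar> \<le> 4" by auto
      then have "\<bar>f x * (B x - 2 * x j + A x)\<bar> \<le> \<bar>f x\<bar> * 4"
        by (simp add: abs_mult mult_left_mono)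
      then show "norm (h x) \<le> norm (4 * f x)"
        by (auto simp: h_def indicator_def abs_mult)
    qed
    from Bochner_Integration.integrable_bound[OF i4 hm this] show ?thesis .
  qed
  have "integral\<^sup>L (cube n) h = (\<integral>z. (\<integral>t. h (z(j:=t)) \<partial>MM j) \<partial>PiM ?I MM)"
  proof -
    interpret product_sigma_finite MM by (rule psf)
    show ?thesis
      using product_integral_insert[of ?I j h] hi cube_split[OF jn] by simp
  qed
  also have "\<dots> = 0"
  proof (rule integral_eq_zero_AE)
    have H': "AE x in cube n. x \<in> chamber n \<pi> \<longrightarrow>
       (AE y in lborel. y \<in> {ord_stat n x (k-1) <..< ord_stat n x (k+1)} \<longrightarrow> f (x(j := y)) = f x)"
      using H unfolding j_def .
    have inner: "(\<integral>t. h (z(j:=t)) \<partial>MM j) = 0"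
      if z: "z \<in> space (PiM ?I MM)" and Az: "AE t in MM j. z(j:=t) \<in> chamber n \<pi> \<longrightarrow>
       (AE y in lborel. y \<in> {ord_stat n (z(j:=t)) (k-1) <..< ord_stat n (z(j:=t)) (k+1)} \<longrightarrow> f ((z(j:=t))(j := y)) = f (z(j:=t)))"
      for z
    proof -
      have hz: "(\<lambda>t. h (z(j:=t))) \<in> borel_measurable (MM j)"
        by (rule measurable_compose[OF meas_z[OF jn z] hm])
      have spz: "z(j:=t) \<in> space (cube n)" if "t \<in> {0..1}" for t
        using measurable_space[OF meas_z[OF jn z], of t] that by simp
      have km: "k - 2 \<noteq> k - 1" if "k \<noteq> 1" using that k by arith
      have km2: "k \<noteq> k - 1" using k by arith
      have injp: "a = b" if "\<pi> a = \<pi> b" for a b using permutes_inj[OF p] that by (auto dest: injD)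
      have ne1: "\<pi> (k-2) \<noteq> j" if "k \<noteq> 1" unfolding j_def using injp km[OF that] by blast
      have ne2: "\<pi> k \<noteq> j" unfolding j_def using injp km2 by blast
      have AB: "A (z(j:=t)) = A z" "B (z(j:=t)) = B z" for t
        unfolding A_def B_def using ne1 ne2 by auto
      show ?thesis
      proof (cases "\<exists>t0\<in>{0..1}. z(j:=t0) \<in> chamber n \<pi> \<and>
          (AE y in lborel. y \<in> {ord_stat n (z(j:=t0)) (k-1) <..< ord_stat n (z(j:=t0)) (k+1)} \<longrightarrow> f ((z(j:=t0))(j := y)) = f (z(j:=t0)))")
        case True
        then obtain t0 where t0: "t0 \<in> {0..1}" and ch0: "z(j:=t0) \<in> chamber n \<pi>"
          and ae0: "AE y in lborel. y \<in> {ord_stat n (z(j:=t0)) (k-1) <..< ord_stat n (z(j:=t0)) (k+1)} \<longrightarrow> f ((z(j:=t0))(j := y)) = f (z(j:=t0))"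
          by blast
        define c where "c = f (z(j:=t0))"
        have o1: "ord_stat n (z(j:=t0)) (k-1) = A z"
        proof (cases "k = 1")
          case True then show ?thesis by (simp add: ord_stat_def A_def)
        next
          case False
          then have "ord_stat n (z(j:=t0)) (k-1) = (z(j:=t0)) (\<pi> (k-1-1))"
            using k by (intro ord_stat_chamber[OF p ch0]) auto
          also have "\<dots> = z (\<pi> (k-2))"
          proof -
            have e: "k - 1 - 1 = k - 2" by simp
            show ?thesis unfolding e using ne1[OF False] by simp
          qed
          finally show ?thesis using False by (simp add: A_def)
        qed
        have o2: "ord_stat n (z(j:=t0)) (k+1) = B z"
        proof (cases "k = n")
          case True then show ?thesis by (simp add: ord_stat_def B_def)
        next
          case False
          then have "ord_stat n (z(j:=t0)) (k+1) = (z(j:=t0)) (\<pi> (k+1-1))"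
            using k by (intro ord_stat_chamber[OF p ch0]) auto
          also have "\<dots> = z (\<pi> k)" using ne2 by simp
          finally show ?thesis using False by (simp add: B_def)
        qed
        have aeC: "AE y in lborel. y \<in> {A z<..<B z} \<longrightarrow> f (z(j:=y)) = c"
          using ae0 unfolding o1 o2 c_def by simp
        have fw: "(k = 1 \<or> z(\<pi>(k-2)) < t0) \<and> (k = n \<or> t0 < z(\<pi> k))"
          using chamber_upd_iff[OF p k ch0[unfolded j_def] t0] ch0 unfolding j_def by simp
        have ABle: "A z \<le> B z" using fw t0 by (auto simp: A_def B_def)
        have A0: "0 \<le> A z" and B1: "B z \<le> 1"
          using cube_coord[OF spz[OF t0] p, of "k-2"] cube_coord[OF spz[OF t0] p, of "k"] k AB[of t0]
          by (auto simp: A_def B_def)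
        have chiff: "z(j:=t) \<in> chamber n \<pi> \<longleftrightarrow> A z < t \<and> t < B z" if "t \<in> {0<..<1}" for t
          using chamber_upd_iff[OF p k ch0[unfolded j_def], of t] that unfolding j_def[symmetric]
          by (auto simp: A_def B_def)
        have pt: "h (z(j:=t)) = c * (indicator {A z<..<B z} t * (A z + B z - 2*t))"
          if t: "t \<in> {0<..<1}" and ft: "t \<in> {A z<..<B z} \<longrightarrow> f (z(j:=t)) = c" for t
          using chiff[OF t] ft AB[of t] by (auto simp: h_def indicator_def)
        have ae1: "AE t in MM j. h (z(j:=t)) = c * (indicator {A z<..<B z} t * (A z + B z - 2*t))"
        proof (subst AE_restrict_space_iff)
          show "{0..1::real} \<inter> space lborel \<in> sets lborel" by simp
          show "AE t in lborel. t \<in> {0..1} \<longrightarrow> h (z(j:=t)) = c * (indicator {A z<..<B z} t * (A z + B z - 2*t))"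
            using aeC AE_lborel_singleton[of 0] AE_lborel_singleton[of 1]
            by eventually_elim (auto intro!: pt)
        qed
        have rm: "(\<lambda>t. c * (indicator {A z<..<B z} t * (A z + B z - 2*t))) \<in> borel_measurable (MM j)"
          by (intro measurable_restrict_space1) measurable
        have "(\<integral>t. h (z(j:=t)) \<partial>MM j) = (\<integral>t. c * (indicator {A z<..<B z} t * (A z + B z - 2*t)) \<partial>MM j)"
          by (rule integral_cong_AE[OF hz rm ae1])
        also have "\<dots> = c * (\<integral>t. indicator {A z<..<B z} t * (A z + B z - 2*t) \<partial>MM j)"
          by simp
        also have "(\<integral>t. indicator {A z<..<B z} t * (A z + B z - 2*t) \<partial>MM j)
            = (\<integral>t. indicator {0..1} t *\<^sub>R (indicator {A z<..<B z} t * (A z + B z - 2*t)) \<partial>lborel)"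
          by (rule integral_restrict_space) simp
        also have "\<dots> = (\<integral>t. indicator {A z<..<B z} t * (A z + B z - 2*t) \<partial>lborel)"
          using A0 B1 by (intro Bochner_Integration.integral_cong) (auto simp: indicator_def)
        also have "\<dots> = 0" by (rule oneD[OF ABle])
        finally show ?thesis by (metis mult_zero_right)
      next
        case False
        have "AE t in MM j. h (z(j:=t)) = 0"
          using Az
        proof (rule AE_mp, intro AE_I2 impI)
          fix t assume t: "t \<in> space (MM j)" and q: "z(j:=t) \<in> chamber n \<pi> \<longrightarrow>
           (AE y in lborel. y \<in> {ord_stat n (z(j:=t)) (k-1) <..< ord_stat n (z(j:=t)) (k+1)} \<longrightarrow> f ((z(j:=t))(j := y)) = f (z(j:=t)))"
          have "z(j:=t) \<notin> chamber n \<pi>" using False q t by auto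
          then show "h (z(j:=t)) = 0" by (simp add: h_def)
        qed
        then show ?thesis by (rule integral_eq_zero_AE)
      qed
    qed
    have AEz: "AE z in PiM ?I MM. AE t in MM j. z(j:=t) \<in> chamber n \<pi> \<longrightarrow>
       (AE y in lborel. y \<in> {ord_stat n (z(j:=t)) (k-1) <..< ord_stat n (z(j:=t)) (k+1)} \<longrightarrow> f ((z(j:=t))(j := y)) = f (z(j:=t)))"
      by (rule AE_split[OF jn H'])
    show "AE z in PiM ?I MM. (\<integral>t. h (z(j:=t)) \<partial>MM j) = 0"
      by (rule AE_mp[OF AEz AE_I2]) (use inner in blast)
  qed
  finally have "integral\<^sup>L (cube n) h = 0" .
  moreover have "(\<integral>x. f x * ((if k = n then 1 else x (\<pi> k)) - 2 * x (\<pi> (k-1)) + (if k = 1 then 0 else x (\<pi> (k-2))))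
            * indicator (chamber n \<pi>) x \<partial>cube n) = integral\<^sup>L (cube n) h"
    unfolding h_def A_def B_def j_def by (rule refl)
  ultimately show ?thesis by simp
qed



definition wch :: "nat \<Rightarrow> (nat \<Rightarrow> nat) \<Rightarrow> (nat \<Rightarrow> real) set" where
  "wch n \<pi> = {x \<in> space (cube n). \<forall>i j. i < j \<and> j < n \<longrightarrow> x (\<pi> i) \<le> x (\<pi> j)}"

lemma sort_weak:
  assumes p: "\<pi> permutes {..<n}" and x: "x \<in> wch n \<pi>"
  shows "sort (map x [0..<n]) = map (\<lambda>i. x (\<pi> i)) [0..<n]"
proof (rule properties_for_sort)
  have "mset (map \<pi> [0..<n]) = mset [0..<n]"
    using image_mset_mset_set[OF permutes_inj_on[OF p]] permutes_image[OF p]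
    by (simp add: mset_upt atLeast0LessThan)
  then have "mset (map x (map \<pi> [0..<n])) = mset (map x [0..<n])"
    by (metis mset_map)
  then show "mset (map (\<lambda>i. x (\<pi> i)) [0..<n]) = mset (map x [0..<n])" by (simp add: o_def)
  show "sorted (map (\<lambda>i. x (\<pi> i)) [0..<n])"
  proof (rule sorted_iff_nth_mono_less[THEN iffD2], intro allI impI)
    fix i j assume "i < j" "j < length (map (\<lambda>i. x (\<pi> i)) [0..<n])"
    then show "map (\<lambda>i. x (\<pi> i)) [0..<n] ! i \<le> map (\<lambda>i. x (\<pi> i)) [0..<n] ! j"
      using x by (auto simp: wch_def)
  qed
qed

lemma ord_weak:
  assumes "\<pi> permutes {..<n}" "x \<in> wch n \<pi>" "1 \<le> k" "k \<le> n"
  shows "ord_stat n x k = x (\<pi> (k-1))"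
proof -
  have "[0..<n] ! (k-1) = k-1" using assms by simp
  then show ?thesis using assms by (simp add: ord_stat_def sort_weak)
qed

lemma wch_exists:
  assumes x: "x \<in> space (cube n)"
  obtains \<pi> where "\<pi> permutes {..<n}" "x \<in> wch n \<pi>"
proof -
  let ?xs = "map x [0..<n]"
  have "mset (sort ?xs) = mset ?xs" by simp
  then obtain p where p: "p permutes {..<length ?xs}" "permute_list p ?xs = sort ?xs"
    by (rule mset_eq_permutation)
  have p': "p permutes {..<n}" using p by simp
  have nth: "sort ?xs ! i = x (p i)" if "i < n" for i
  proof -
    have "p i < n" using p' that by (metis permutes_in_image lessThan_iff)
    then show ?thesis using p(2)[symmetric] p' that by (simp add: permute_list_nth p(1))
  qed
  have "sorted (sort ?xs)" by simp
  then have "x (p i) \<le> x (p j)" if "i < j" "j < n" for i j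
    using that nth by (auto simp: sorted_iff_nth_mono_less)
  then have "x \<in> wch n p" using x by (auto simp: wch_def)
  then show ?thesis using that p' by blast
qed

lemma wch_sets:
  assumes p: "\<pi> permutes {..<n}"
  shows "wch n \<pi> \<in> sets (cube n)"
proof -
  have eq: "wch n \<pi> = {x\<in>space (cube n). \<forall>u\<in>{..<n}. \<forall>v\<in>{..<n}. u < v \<longrightarrow> x (\<pi> u) \<le> x (\<pi> v)}"
    unfolding wch_def by (auto 0 0 intro!: Collect_cong)
  have "Measurable.pred (cube n) (\<lambda>x. \<forall>u\<in>{..<n}. \<forall>v\<in>{..<n}. u < v \<longrightarrow> x (\<pi> u) \<le> x (\<pi> v))"
  proof (intro pred_intros_finite finite_lessThan)
    fix u v assume "u \<in> {..<n}" "v \<in> {..<n}"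
    have mu: "(\<lambda>x. x (\<pi> u)) \<in> borel_measurable (cube n)" using comp_meas'[OF p, of u] \<open>u \<in> {..<n}\<close> by simp
    have mv: "(\<lambda>x. x (\<pi> v)) \<in> borel_measurable (cube n)" using comp_meas'[OF p, of v] \<open>v \<in> {..<n}\<close> by simp
    show "Measurable.pred (cube n) (\<lambda>x. u < v \<longrightarrow> x (\<pi> u) \<le> x (\<pi> v))"
      by (intro pred_intros_imp') (simp add: pred_def borel_measurable_le[OF mu mv])
  qed
  then show ?thesis unfolding eq by (rule predE)
qed

lemma ord_formula:
  assumes x: "x \<in> space (cube n)" and m: "1 \<le> m" "m \<le> n"
  shows "ord_stat n x m = (\<Sum>\<pi>\<in>{\<pi>. \<pi> permutes {..<n}}. indicator (wch n \<pi>) x * x (\<pi> (m-1)))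
                          / (\<Sum>\<pi>\<in>{\<pi>. \<pi> permutes {..<n}}. indicator (wch n \<pi>) x)"
proof -
  let ?P = "{\<pi>. \<pi> permutes {..<n}}"
  have fin: "finite ?P" by (rule finite_permutations) simp
  have "(\<Sum>\<pi>\<in>?P. indicator (wch n \<pi>) x * x (\<pi> (m-1))) = (\<Sum>\<pi>\<in>?P. indicator (wch n \<pi>) x * ord_stat n x m)"
    by (rule sum.cong) (auto simp: indicator_def ord_weak[OF _ _ m])
  also have "\<dots> = ord_stat n x m * (\<Sum>\<pi>\<in>?P. indicator (wch n \<pi>) x)"
    by (simp add: sum_distrib_left mult.commute)
  finally have e: "(\<Sum>\<pi>\<in>?P. indicator (wch n \<pi>) x * x (\<pi> (m-1))) = ord_stat n x m * (\<Sum>\<pi>\<in>?P. indicator (wch n \<pi>) x)" .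
  obtain \<pi> where \<pi>: "\<pi> permutes {..<n}" "x \<in> wch n \<pi>" using wch_exists[OF x] by blast
  have "1 \<le> (\<Sum>\<pi>\<in>?P. indicator (wch n \<pi>) x :: real)"
  proof -
    have "(indicator (wch n \<pi>) x :: real) \<le> (\<Sum>\<pi>\<in>?P. indicator (wch n \<pi>) x)"
      by (rule member_le_sum) (use \<pi> fin in auto)
    then show ?thesis using \<pi> by simp
  qed
  then show ?thesis unfolding e by simp
qed

lemma ord_meas:
  assumes "m \<le> n + 1"
  shows "(\<lambda>x. ord_stat n x m) \<in> borel_measurable (cube n)"
proof -
  consider "m = 0" | "m = n + 1" | "1 \<le> m" "m \<le> n" using assms by linarith
  then show ?thesis
  proof cases
    case 1 then show ?thesis by (simp add: ord_stat_def)
  next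
    case 2 then show ?thesis by (simp add: ord_stat_def)
  next
    case 3
    let ?P = "{\<pi>. \<pi> permutes {..<n}}"
    have m1: "(\<lambda>x. \<Sum>\<pi>\<in>?P. indicator (wch n \<pi>) x * x (\<pi> (m-1))) \<in> borel_measurable (cube n)"
    proof (rule borel_measurable_sum)
      fix \<pi> assume "\<pi> \<in> ?P"
      then have p: "\<pi> permutes {..<n}" by simp
      show "(\<lambda>x. indicator (wch n \<pi>) x * x (\<pi> (m-1))) \<in> borel_measurable (cube n)"
      proof (rule borel_measurable_times)
        show "(\<lambda>x. x (\<pi> (m-1))) \<in> borel_measurable (cube n)" using comp_meas'[OF p, of "m-1"] 3 by simp
      qed (rule borel_measurable_indicator[OF wch_sets[OF p]])
    qed
    have m2: "(\<lambda>x. \<Sum>\<pi>\<in>?P. indicator (wch n \<pi>) x :: real) \<in> borel_measurable (cube n)"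
    proof (rule borel_measurable_sum)
      fix \<pi> assume "\<pi> \<in> ?P"
      then have p: "\<pi> permutes {..<n}" by simp
      show "(\<lambda>x. indicator (wch n \<pi>) x :: real) \<in> borel_measurable (cube n)"
        using wch_sets[OF p] by measurable
    qed
    have "(\<lambda>x. (\<Sum>\<pi>\<in>?P. indicator (wch n \<pi>) x * x (\<pi> (m-1))) / (\<Sum>\<pi>\<in>?P. indicator (wch n \<pi>) x)) \<in> borel_measurable (cube n)"
      using m1 m2 by (rule borel_measurable_divide)
    then show ?thesis by (subst measurable_cong[OF ord_formula[OF _ 3]]) auto
  qed
qed



lemma cube_finite: "finite_measure (cube n)"
proof (rule finite_measureI)
  interpret product_sigma_finite MM by (rule psf)
  have "emeasure (cube n) (space (cube n)) = emeasure (PiM {..<n} MM) (PiE {..<n} (\<lambda>_. {0..1}))"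
    by (simp add: cube_def space_PiM)
  also have "\<dots> = (\<Prod>i\<in>{..<n}. emeasure (MM i) {0..1})"
    by (rule emeasure_PiM) (auto simp: sets_restrict_space_iff)
  also have "\<dots> = 1" by (simp add: emeasure_restrict_space)
  finally show "emeasure (cube n) (space (cube n)) \<noteq> \<infinity>" by simp
qed

lemma term_integrable:
  assumes p: "\<pi> permutes {..<n}" and k: "1 \<le> k" "k \<le> n"
    and fm: "f \<in> borel_measurable (cube n)" and fi: "integrable (cube n) f"
  shows "integrable (cube n) (\<lambda>x. f x * ((if k = n then 1 else x (\<pi> k)) - 2 * x (\<pi> (k-1)) + (if k = 1 then 0 else x (\<pi> (k-2))))
            * indicator (chamber n \<pi>) x)" (is "integrable _ ?h")
proof -
  define A where "A z = (if k = 1 then 0 else z (\<pi> (k-2)))" for z :: "nat \<Rightarrow> real"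
  define B where "B z = (if k = n then 1 else z (\<pi> k))" for z :: "nat \<Rightarrow> real"
  have Am: "A \<in> borel_measurable (cube n)" unfolding A_def using comp_meas'[OF p, of "k-2"] k by auto
  have Bm: "B \<in> borel_measurable (cube n)" unfolding B_def using comp_meas'[OF p, of "k"] k by (cases "k = n") auto
  have jm: "(\<lambda>x. x (\<pi> (k-1))) \<in> borel_measurable (cube n)" using comp_meas'[OF p, of "k-1"] k by auto
  have hm: "(\<lambda>x. f x * (B x - 2 * x (\<pi> (k-1)) + A x) * indicator (chamber n \<pi>) x) \<in> borel_measurable (cube n)"
    using Am Bm jm fm chamber_sets[OF p] by measurable
  have i4: "integrable (cube n) (\<lambda>x. 4 * f x)" using fi by simp
  have "AE x in cube n. norm (f x * (B x - 2 * x (\<pi> (k-1)) + A x) * indicator (chamber n \<pi>) x) \<le> norm (4 * f x)"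
  proof (rule AE_I2)
    fix x assume x: "x \<in> space (cube n)"
    have "A x \<in> {0..1}" "B x \<in> {0..1}" "x (\<pi> (k-1)) \<in> {0..1}"
      using cube_coord[OF x p, of "k-2"] cube_coord[OF x p, of "k"] cube_coord[OF x p, of "k-1"] k
      by (auto simp: A_def B_def)
    then have "\<bar>B x - 2 * x (\<pi> (k-1)) + A x\<bar> \<le> 4" by auto
    then have "\<bar>f x * (B x - 2 * x (\<pi> (k-1)) + A x)\<bar> \<le> \<bar>f x\<bar> * 4"
      by (simp add: abs_mult mult_left_mono)
    then show "norm (f x * (B x - 2 * x (\<pi> (k-1)) + A x) * indicator (chamber n \<pi>) x) \<le> norm (4 * f x)"
      by (auto simp: indicator_def abs_mult)
  qed
  from Bochner_Integration.integrable_bound[OF i4 hm this]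
  show ?thesis unfolding A_def B_def .
qed

theorem proposition12:
  fixes n k :: nat and f :: "(nat \<Rightarrow> real) \<Rightarrow> real"
  assumes "n \<ge> 1" and "k \<in> {1..n}"
    and "f \<in> borel_measurable (cube n)"
    and "integrable (cube n) (\<lambda>x. (f x)\<^sup>2)"
    and "ineffective_ae n f k"
  shows "influence n f k = 0"
proof -
  have k: "1 \<le> k" "k \<le> n" using assms(2) by auto
  note fm = assms(3)
  interpret finite_measure "cube n" by (rule cube_finite)
  have fi: "integrable (cube n) f"
  proof -
    have "integrable (cube n) (\<lambda>x. 1 + (f x)\<^sup>2)" using assms(4) by simp
    moreover have "AE x in cube n. norm (f x) \<le> norm (1 + (f x)\<^sup>2)"
    proof (rule AE_I2)
      fix x
      have "\<bar>f x\<bar> \<le> 1 + (f x)\<^sup>2"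
      proof -
        have "0 \<le> (\<bar>f x\<bar> - 1)\<^sup>2" by simp
        then have "2 * \<bar>f x\<bar> \<le> (f x)\<^sup>2 + 1"
          by (simp add: power2_eq_square algebra_simps abs_mult_self_eq)
        then show ?thesis by simp
      qed
      then show "norm (f x) \<le> norm (1 + (f x)\<^sup>2)" by simp
    qed
    ultimately show ?thesis using Bochner_Integration.integrable_bound fm by blast
  qed
  let ?P = "{\<pi>. \<pi> permutes {..<n}}"
  have fin: "finite ?P" by (rule finite_permutations) simp
  define G where "G \<pi> x = f x * ((if k = n then 1 else x (\<pi> k)) - 2 * x (\<pi> (k-1)) + (if k = 1 then 0 else x (\<pi> (k-2))))
            * indicator (chamber n \<pi>) x" for \<pi> x
  define g where "g x = ord_stat n x (k + 1) - 2 * ord_stat n x k + ord_stat n x (k - 1)" for x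
  have Gi: "integrable (cube n) (G \<pi>)" if "\<pi> \<in> ?P" for \<pi>
    unfolding G_def using term_integrable[of \<pi> n k f] that k fm fi by simp
  have G0: "integral\<^sup>L (cube n) (G \<pi>) = 0" if "\<pi> \<in> ?P" for \<pi>
  proof -
    have p: "\<pi> permutes {..<n}" using that by simp
    have H: "AE x in cube n. x \<in> chamber n \<pi> \<longrightarrow>
       (AE y in lborel. y \<in> {ord_stat n x (k-1) <..< ord_stat n x (k+1)} \<longrightarrow> f (x(\<pi>(k-1) := y)) = f x)"
    proof -
    have step: "x \<in> chamber n \<pi> \<longrightarrow>
       (AE y in lborel. y \<in> {ord_stat n x (k-1) <..< ord_stat n x (k+1)} \<longrightarrow> f (x(\<pi>(k-1) := y)) = f x)"
      if h:  "\<forall>\<pi>. \<pi> permutes {..<n} \<and> x \<in> chamber n \<pi> \<longrightarrow>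
        (AE y in lborel. y \<in> {ord_stat n x (k - 1)<..<ord_stat n x (k + 1)} \<longrightarrow>
           Delta f \<pi> k (y - ord_stat n x k) x = 0)" for x
    proof
      assume c: "x \<in> chamber n \<pi>"
      have ok: "ord_stat n x k = x (\<pi> (k-1))" by (rule ord_stat_chamber[OF p c k])
      have "AE y in lborel. y \<in> {ord_stat n x (k - 1)<..<ord_stat n x (k + 1)} \<longrightarrow>
           Delta f \<pi> k (y - ord_stat n x k) x = 0" using h p c by blast
      then show "AE y in lborel. y \<in> {ord_stat n x (k-1) <..< ord_stat n x (k+1)} \<longrightarrow> f (x(\<pi>(k-1) := y)) = f x"
        by (rule AE_mp[OF _ AE_I2]) (simp add: Delta_def ok)
    qed
    show ?thesis using assms(5) unfolding ineffective_ae_def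
      by (rule AE_mp[OF _ AE_I2]) (use step in blast)
    qed
    show ?thesis unfolding G_def by (rule core[OF p k fm fi H])
  qed
  have ae: "AE x in cube n. f x * g x = (\<Sum>\<pi>\<in>?P. G \<pi> x)"
    using AE_inj[of n]
  proof (rule AE_mp, intro AE_I2 impI)
    fix x assume x: "x \<in> space (cube n)" and inj: "inj_on x {..<n}"
    obtain \<pi> where p: "\<pi> permutes {..<n}" and c: "x \<in> chamber n \<pi>" by (rule chamber_exists[OF x inj])
    have "(\<Sum>\<sigma>\<in>?P. G \<sigma> x) = G \<pi> x + (\<Sum>\<sigma>\<in>?P-{\<pi>}. G \<sigma> x)"
      by (rule sum.remove) (use fin p in auto)
    also have "(\<Sum>\<sigma>\<in>?P-{\<pi>}. G \<sigma> x) = 0"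
    proof (rule sum.neutral, rule ballI)
      fix \<sigma> assume "\<sigma> \<in> ?P-{\<pi>}"
      then have "x \<notin> chamber n \<sigma>" using chamber_unique[OF p c, of \<sigma>] by auto
      then show "G \<sigma> x = 0" by (simp add: G_def)
    qed
    also have "G \<pi> x = f x * g x"
    proof -
      have o0: "ord_stat n x k = x (\<pi> (k-1))" by (rule ord_stat_chamber[OF p c k])
      have o1: "ord_stat n x (k-1) = (if k = 1 then 0 else x (\<pi> (k-2)))"
      proof (cases "k = 1")
        case True then show ?thesis by (simp add: ord_stat_def)
      next
        case False
        then have "ord_stat n x (k-1) = x (\<pi> (k-1-1))" using k by (intro ord_stat_chamber[OF p c]) auto
        moreover have "k - 1 - 1 = k - 2" by simp
        ultimately show ?thesis using False by simp
      qed
      have o2: "ord_stat n x (k+1) = (if k = n then 1 else x (\<pi> k))"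
      proof (cases "k = n")
        case True then show ?thesis by (simp add: ord_stat_def)
      next
        case False
        then have "ord_stat n x (k+1) = x (\<pi> (k+1-1))" using k by (intro ord_stat_chamber[OF p c]) auto
        then show ?thesis using False by simp
      qed
      show ?thesis unfolding G_def g_def o0 o1 o2 using c by simp
    qed
    finally show "f x * g x = (\<Sum>\<pi>\<in>?P. G \<pi> x)" by simp
  qed
  have gm: "g \<in> borel_measurable (cube n)"
  proof -
    have m1: "(\<lambda>x. ord_stat n x (k+1)) \<in> borel_measurable (cube n)" by (rule ord_meas) (use k in simp)
    have m2: "(\<lambda>x. ord_stat n x k) \<in> borel_measurable (cube n)" by (rule ord_meas) (use k in simp)
    have m3: "(\<lambda>x. ord_stat n x (k-1)) \<in> borel_measurable (cube n)" by (rule ord_meas) (use k in simp)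
    show ?thesis unfolding g_def using m1 m2 m3 by measurable
  qed
  have sm: "(\<lambda>x. \<Sum>\<pi>\<in>?P. G \<pi> x) \<in> borel_measurable (cube n)"
    using Gi by (intro borel_measurable_sum) (rule borel_measurable_integrable)
  have "(\<integral>x. f x * g x \<partial>cube n) = (\<integral>x. (\<Sum>\<pi>\<in>?P. G \<pi> x) \<partial>cube n)"
    by (rule integral_cong_AE[OF _ sm ae]) (use fm gm in measurable)
  also have "\<dots> = (\<Sum>\<pi>\<in>?P. integral\<^sup>L (cube n) (G \<pi>))"
    by (rule Bochner_Integration.integral_sum) (rule Gi)
  also have "\<dots> = 0" using G0 by simp
  finally show ?thesis unfolding influence_def g_def by simp
qed


end
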